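(* Let $H(s)=\sum_{a=1}^M H_a(s)$, $0\le s\le1$, be a differentiable family of stoquastic frustration-free Hamiltonians on $\mathcal{Q}^n$ with $J=\max_s\|dH(s)/ds\|$. Let $T$ be a positive integer and $H^{(j)}=H(j/T)$ for $j=0,\ldots,T$. Assume each $H^{(j)}$ has a unique ground-state $|\psi^{(j)}\rangle$, with $H^{(j)}|\psi^{(j)}\rangle=0$, chosen to be a non-negative state, and let $\Delta$ be the smallest, over $j=0,\ldots,T$, of the spectral gap of $H^{(j)}$ (the difference between its smallest and second smallest eigenvalues). Then for every $j=0,\ldots,T-1$, $$\langle\psi^{(j+1)}|\psi^{(j)}\rangle\ge 1-\frac{J^2}{T^2\Delta^2}.$$
   Context: $\mathcal{Q}^n=(\mathbb{C}^2)^{\otimes n}$ with standard basis $\{|x\rangle\}$. A local Hamiltonian $H=\sum_a H_a$ (each term acting on $O(1)$ qubits) is stoquastic if each term has real non-positive off-diagonal entries in the standard basis, and frustration-free if each term is positive semidefinite and the ground-state of $H$ is a zero eigenvector of every term. A non-negative state is a normalized vector with real non-negative amplitudes in the standard basis. *)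

theory Defs
  imports "HOL-Analysis.Analysis"
begin

text \<open>The n-qubit space (C^2)^{\<otimes> n} is modelled by vectors \<open>nat \<Rightarrow> complex\<close> of which
only the entries with index \<open>x < 2^n\<close> matter; the basis state \<open>|x\<rangle>\<close> corresponds to the
bit string whose i-th bit (i < n) is \<open>bit x i\<close>.  Operators are \<open>nat \<Rightarrow> nat \<Rightarrow> complex\<close>
(matrix entries in the standard basis), again only entries below \<open>2^n\<close> matter.\<close>

type_synonym cvec = "nat \<Rightarrow> complex"
type_synonym cmat = "nat \<Rightarrow> nat \<Rightarrow> complex"

definition mat_vec :: "nat \<Rightarrow> cmat \<Rightarrow> cvec \<Rightarrow> cvec" where
  "mat_vec n A v = (\<lambda>x. \<Sum>y<2^n. A x y * v y)"

definition inner_q :: "nat \<Rightarrow> cvec \<Rightarrow> cvec \<Rightarrow> complex" where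
  "inner_q n u v = (\<Sum>x<2^n. cnj (u x) * v x)"

definition vnorm :: "nat \<Rightarrow> cvec \<Rightarrow> real" where
  "vnorm n v = sqrt (\<Sum>x<(2::nat)^n. (cmod (v x))\<^sup>2)"

definition opnorm :: "nat \<Rightarrow> cmat \<Rightarrow> real" where
  "opnorm n A = (SUP v \<in> {v. vnorm n v = 1}. vnorm n (mat_vec n A v))"

definition nonzero_vec :: "nat \<Rightarrow> cvec \<Rightarrow> bool" where
  "nonzero_vec n v \<longleftrightarrow> (\<exists>x<2^n. v x \<noteq> 0)"

definition hermitian :: "nat \<Rightarrow> cmat \<Rightarrow> bool" where
  "hermitian n A \<longleftrightarrow> (\<forall>x<2^n. \<forall>y<2^n. A x y = cnj (A y x))"

definition psd :: "nat \<Rightarrow> cmat \<Rightarrow> bool" where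
  "psd n A \<longleftrightarrow> hermitian n A \<and>
     (\<forall>v. inner_q n v (mat_vec n A v) \<in> \<real> \<and> Re (inner_q n v (mat_vec n A v)) \<ge> 0)"

definition stoquastic_term :: "nat \<Rightarrow> cmat \<Rightarrow> bool" where
  "stoquastic_term n A \<longleftrightarrow> (\<forall>x<2^n. \<forall>y<2^n. x \<noteq> y \<longrightarrow> A x y \<in> \<real> \<and> Re (A x y) \<le> 0)"

text \<open>\<open>A\<close> acts only on the qubits in \<open>S\<close>, i.e. \<open>A = h_S \<otimes> I\<close>.\<close>
definition acts_on :: "nat \<Rightarrow> nat set \<Rightarrow> cmat \<Rightarrow> bool" where
  "acts_on n S A \<longleftrightarrow>
     (\<forall>x<2^n. \<forall>y<2^n. (\<exists>i<n. i \<notin> S \<and> bit x i \<noteq> bit y i) \<longrightarrow> A x y = 0) \<and>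
     (\<forall>x<2^n. \<forall>y<2^n. \<forall>x'<2^n. \<forall>y'<2^n.
        (\<forall>i<n. i \<notin> S \<longrightarrow> bit x i = bit y i \<and> bit x' i = bit y' i) \<and>
        (\<forall>i\<in>S. bit x i = bit x' i \<and> bit y i = bit y' i) \<longrightarrow> A x y = A x' y')"

text \<open>Eigenvalues (real, as the operators considered are Hermitian).\<close>
definition eigenvalues :: "nat \<Rightarrow> cmat \<Rightarrow> real set" where
  "eigenvalues n A = {\<mu>. \<exists>v. nonzero_vec n v \<and> (\<forall>x<2^n. mat_vec n A v x = of_real \<mu> * v x)}"

definition ground_energy :: "nat \<Rightarrow> cmat \<Rightarrow> real" where
  "ground_energy n A = Min (eigenvalues n A)"

definition spectral_gap :: "nat \<Rightarrow> cmat \<Rightarrow> real" where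
  "spectral_gap n A = Min (eigenvalues n A - {ground_energy n A}) - ground_energy n A"

definition is_ground_state :: "nat \<Rightarrow> cmat \<Rightarrow> cvec \<Rightarrow> bool" where
  "is_ground_state n A v \<longleftrightarrow> nonzero_vec n v \<and>
     (\<forall>x<2^n. mat_vec n A v x = of_real (ground_energy n A) * v x)"

definition unique_ground_state :: "nat \<Rightarrow> cmat \<Rightarrow> cvec \<Rightarrow> bool" where
  "unique_ground_state n A \<psi> \<longleftrightarrow> is_ground_state n A \<psi> \<and>
     (\<forall>v. is_ground_state n A v \<longrightarrow> (\<exists>c. \<forall>x<2^n. v x = c * \<psi> x))"

definition nonneg_state :: "nat \<Rightarrow> cvec \<Rightarrow> bool" where
  "nonneg_state n \<psi> \<longleftrightarrow> vnorm n \<psi> = 1 \<and> (\<forall>x<2^n. \<psi> x \<in> \<real> \<and> Re (\<psi> x) \<ge> 0)"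

definition ham_sum :: "nat \<Rightarrow> (nat \<Rightarrow> cmat) \<Rightarrow> cmat" where
  "ham_sum M h = (\<lambda>x y. \<Sum>a<M. h a x y)"

definition stoquastic_ham :: "nat \<Rightarrow> nat \<Rightarrow> (nat \<Rightarrow> cmat) \<Rightarrow> bool" where
  "stoquastic_ham n M h \<longleftrightarrow> (\<forall>a<M. stoquastic_term n (h a))"

definition frustration_free :: "nat \<Rightarrow> nat \<Rightarrow> (nat \<Rightarrow> cmat) \<Rightarrow> bool" where
  "frustration_free n M h \<longleftrightarrow> (\<forall>a<M. psd n (h a)) \<and>
     (\<forall>v. is_ground_state n (ham_sum M h) v \<longrightarrow> (\<forall>a<M. \<forall>x<2^n. mat_vec n (h a) v x = 0))"

end

theory Submission
  imports Defs "Jordan_Normal_Form.Char_Poly"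
begin

lemma inner_q_cnj: "inner_q n u v = cnj (inner_q n v u)"
  unfolding inner_q_def by (simp add: mult.commute)

lemma herm_swap:
  assumes "hermitian n A"
  shows "inner_q n u (mat_vec n A v) = inner_q n (mat_vec n A u) v"
proof -
  have "inner_q n u (mat_vec n A v) = (\<Sum>x<2^n. \<Sum>y<2^n. cnj (u x) * (A x y * v y))"
    unfolding inner_q_def mat_vec_def by (simp only: sum_distrib_left)
  also have "\<dots> = (\<Sum>y<2^n. \<Sum>x<2^n. cnj (u x) * (A x y * v y))" by (rule sum.swap)
  also have "\<dots> = (\<Sum>y<2^n. (\<Sum>x<2^n. cnj (A y x * u x)) * v y)"
    unfolding sum_distrib_right
  proof (intro sum.cong refl)
    fix y x assume "y \<in> {..<(2::nat)^n}" "x \<in> {..<(2::nat)^n}"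
    then have "A x y = cnj (A y x)" using assms unfolding hermitian_def by blast
    then show "cnj (u x) * (A x y * v y) = cnj (A y x * u x) * v y" by simp
  qed
  also have "\<dots> = inner_q n (mat_vec n A u) v"
    unfolding inner_q_def mat_vec_def by (simp only: cnj_sum)
  finally show ?thesis .
qed

lemma vnorm_L2: "vnorm n v = L2_set (\<lambda>x. cmod (v x)) {..<2^n}"
  unfolding vnorm_def L2_set_def by simp

lemma vnorm_nonneg: "vnorm n v \<ge> 0"
  unfolding vnorm_def by (simp add: sum_nonneg)

lemma inner_self: "inner_q n v v = of_real ((vnorm n v)\<^sup>2)"
proof -
  have "inner_q n v v = (\<Sum>x<2^n. of_real ((cmod (v x))\<^sup>2))"
    unfolding inner_q_def
    by (intro sum.cong refl) (metis complex_norm_square mult.commute of_real_power)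
  also have "\<dots> = of_real ((vnorm n v)\<^sup>2)"
    unfolding vnorm_def by (simp add: sum_nonneg)
  finally show ?thesis .
qed

lemma cauchy_schwarz: "cmod (inner_q n u v) \<le> vnorm n u * vnorm n v"
proof -
  have "cmod (inner_q n u v) \<le> (\<Sum>x<2^n. cmod (cnj (u x) * v x))"
    unfolding inner_q_def by (rule norm_sum)
  also have "\<dots> = (\<Sum>x<2^n. \<bar>cmod (u x)\<bar> * \<bar>cmod (v x)\<bar>)"
    by (simp add: norm_mult)
  also have "\<dots> \<le> vnorm n u * vnorm n v"
    unfolding vnorm_L2 by (rule L2_set_mult_ineq)
  finally show ?thesis .
qed

lemma coord_le_vnorm: "x < 2^n \<Longrightarrow> cmod (v x) \<le> vnorm n v"
  unfolding vnorm_L2 by (rule member_le_L2_set) auto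

lemma opnorm_bound:
  assumes "vnorm n v = 1"
  shows "vnorm n (mat_vec n A v) \<le> opnorm n A"
proof -
  let ?B = "\<Sum>x<2^n. \<Sum>y<(2::nat)^n. cmod (A x y)"
  have b: "vnorm n (mat_vec n A w) \<le> ?B" if "vnorm n w = 1" for w
  proof -
    have "vnorm n (mat_vec n A w) \<le> (\<Sum>x<2^n. \<bar>cmod (mat_vec n A w x)\<bar>)"
      unfolding vnorm_L2 by (rule L2_set_le_sum_abs)
    also have "\<dots> \<le> ?B"
    proof (intro sum_mono)
      fix x assume "x \<in> {..<(2::nat)^n}"
      have "\<bar>cmod (mat_vec n A w x)\<bar> \<le> (\<Sum>y<2^n. cmod (A x y * w y))"
        unfolding mat_vec_def by (simp add: norm_sum)
      also have "\<dots> \<le> (\<Sum>y<2^n. cmod (A x y))"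
      proof (intro sum_mono)
        fix y assume "y \<in> {..<(2::nat)^n}"
        then have "cmod (w y) \<le> 1" using coord_le_vnorm[of y n w] that by simp
        then show "cmod (A x y * w y) \<le> cmod (A x y)"
          by (simp add: norm_mult mult_left_le)
      qed
      finally show "\<bar>cmod (mat_vec n A w x)\<bar> \<le> (\<Sum>y<2^n. cmod (A x y))" .
    qed
    finally show ?thesis .
  qed
  have "bdd_above ((\<lambda>v. vnorm n (mat_vec n A v)) ` {v. vnorm n v = 1})"
    using b by (intro bdd_aboveI2[where M="?B"]) auto
  then show ?thesis unfolding opnorm_def
    by (rule cSUP_upper[rotated]) (use assms in simp)
qed

lemma mvt_bound:
  fixes G D :: "real \<Rightarrow> cmat"
  assumes der: "\<forall>s\<in>{0..1}. \<forall>x<2^n. \<forall>y<2^n. ((\<lambda>t. G t x y) has_vector_derivative D s x y) (at s within {0..1})"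
    and Jb: "\<forall>s\<in>{0..1}. opnorm n (D s) \<le> J"
    and psi: "vnorm n \<psi> = 1"
    and s: "0 \<le> s1" "s1 \<le> s2" "s2 \<le> 1"
  shows "(vnorm n (\<lambda>x. mat_vec n (G s2) \<psi> x - mat_vec n (G s1) \<psi> x))\<^sup>2 \<le> (J * (s2 - s1))\<^sup>2"
proof -
  define w where "w = (\<lambda>x. mat_vec n (G s2) \<psi> x - mat_vec n (G s1) \<psi> x)"
  define f where "f t = inner_q n w (mat_vec n (G t) \<psi>)" for t
  define Df where "Df t = inner_q n w (mat_vec n (D t) \<psi>)" for t
  have d: "(f has_vector_derivative Df t) (at t within {0..1})" if t: "t \<in> {0..1}" for t
    unfolding f_def Df_def inner_q_def mat_vec_def
    apply (intro has_vector_derivative_sum has_vector_derivative_mult_right has_vector_derivative_mult_left)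
    using der t by auto
  have bd: "norm (Df t) \<le> vnorm n w * J" if t: "t \<in> {0..1}" for t
  proof -
    have "norm (Df t) \<le> vnorm n w * vnorm n (mat_vec n (D t) \<psi>)"
      unfolding Df_def by (rule cauchy_schwarz)
    also have "\<dots> \<le> vnorm n w * J"
      apply (intro mult_left_mono vnorm_nonneg)
      using opnorm_bound[OF psi, of "D t"] Jb t by (meson order_trans)
    finally show ?thesis .
  qed
  have "norm (f s2 - f s1) \<le> (vnorm n w * J) * norm (s2 - s1)"
  proof (rule differentiable_bound[where f' = "\<lambda>t h. h *\<^sub>R Df t" and S = "{0..1}"])
    show "convex {0..1::real}" by simp
    show "(f has_derivative (\<lambda>h. h *\<^sub>R Df x)) (at x within {0..1})" if "x \<in> {0..1}" for x
      using d[OF that] unfolding has_vector_derivative_def .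
    show "onorm (\<lambda>h. h *\<^sub>R Df x) \<le> vnorm n w * J" if "x \<in> {0..1}" for x
      using onorm_scaleR_left[OF bounded_linear_ident, of "Df x"] bd[OF that] by (simp add: onorm_id)
  qed (use s in auto)
  moreover have "f s2 - f s1 = inner_q n w w"
    unfolding f_def inner_q_def w_def by (simp add: sum_subtractf[symmetric] algebra_simps)
  ultimately have "(vnorm n w)\<^sup>2 \<le> (vnorm n w * J) * (s2 - s1)"
    using s by (simp add: inner_self norm_power vnorm_nonneg del: of_real_power)
  then have "(vnorm n w)\<^sup>2 \<le> (J * (s2 - s1))\<^sup>2"
  proof (cases "vnorm n w = 0")
    case False
    then have pos: "vnorm n w > 0" using vnorm_nonneg[of n w] by simp
    from \<open>(vnorm n w)\<^sup>2 \<le> _\<close> have "vnorm n w * vnorm n w \<le> vnorm n w * (J * (s2 - s1))"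
      by (simp add: power2_eq_square algebra_simps)
    then have "vnorm n w \<le> J * (s2 - s1)" using pos by simp
    then show ?thesis using pos by (intro power_mono) auto
  qed simp
  then show ?thesis unfolding w_def .
qed

lemma eig_finite: "finite (eigenvalues n A)"
proof -
  define N where "N = (2::nat)^n"
  define B :: "complex mat" where "B = mat N N (\<lambda>(i,j). A i j)"
  have B: "B \<in> carrier_mat N N" unfolding B_def by simp
  have sub: "eigenvalues n A \<subseteq> Re ` {z. poly (char_poly B) z = 0}"
  proof
    fix \<mu> assume "\<mu> \<in> eigenvalues n A"
    then obtain v where nz: "nonzero_vec n v" and ev: "\<forall>x<2^n. mat_vec n A v x = of_real \<mu> * v x"
      unfolding eigenvalues_def by auto
    define v' where "v' = vec N (\<lambda>i. v i)"
    have "eigenvector B v' (of_real \<mu>)"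
      unfolding eigenvector_def
    proof (intro conjI)
      show "v' \<in> carrier_vec (dim_row B)" unfolding v'_def B_def by simp
      show "v' \<noteq> 0\<^sub>v (dim_row B)"
      proof
        assume "v' = 0\<^sub>v (dim_row B)"
        then have "\<forall>i<N. v i = 0" unfolding v'_def B_def
          by (metis dim_row_mat(1) index_vec index_zero_vec(1))
        then show False using nz unfolding nonzero_vec_def N_def by auto
      qed
      show "B *\<^sub>v v' = complex_of_real \<mu> \<cdot>\<^sub>v v'"
      proof (rule eq_vecI)
        fix i assume "i < dim_vec (complex_of_real \<mu> \<cdot>\<^sub>v v')"
        then have i: "i < N" unfolding v'_def by simp
        have "(B *\<^sub>v v') $ i = (\<Sum>j\<in>{0..<N}. A i j * v j)"
          using i unfolding B_def v'_def by (simp add: scalar_prod_def)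
        also have "\<dots> = mat_vec n A v i" unfolding mat_vec_def N_def
          by (simp add: atLeast0LessThan)
        also have "\<dots> = of_real \<mu> * v i" using ev i unfolding N_def by simp
        finally show "(B *\<^sub>v v') $ i = (complex_of_real \<mu> \<cdot>\<^sub>v v') $ i"
          using i unfolding v'_def by simp
      qed (simp add: B_def v'_def)
    qed
    then have "eigenvalue B (of_real \<mu>)" unfolding eigenvalue_def by blast
    then have "poly (char_poly B) (of_real \<mu>) = 0" using eigenvalue_root_char_poly[OF B] by simp
    then show "\<mu> \<in> Re ` {z. poly (char_poly B) z = 0}" by force
  qed
  have "char_poly B \<noteq> 0" using degree_monic_char_poly[OF B] by auto
  then have "finite {z. poly (char_poly B) z = 0}" by (rule poly_roots_finite)
  then show ?thesis using sub finite_subset by blast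
qed

lemma inner_q_cong: "(\<And>x. x < 2^n \<Longrightarrow> u x = u' x) \<Longrightarrow> (\<And>x. x < 2^n \<Longrightarrow> v x = v' x) \<Longrightarrow>
   inner_q n u v = inner_q n u' v'"
  unfolding inner_q_def by (intro sum.cong) auto

lemma vnorm_cong: "(\<And>x. x < 2^n \<Longrightarrow> u x = u' x) \<Longrightarrow> vnorm n u = vnorm n u'"
  unfolding vnorm_def by (intro arg_cong[where f=sqrt] sum.cong) auto

lemma mat_vec_cong: "(\<And>x. x < 2^n \<Longrightarrow> u x = u' x) \<Longrightarrow> mat_vec n A u = mat_vec n A u'"
  unfolding mat_vec_def by (intro ext sum.cong) auto

lemma vnorm_pos: "nonzero_vec n v \<Longrightarrow> vnorm n v > 0"
proof -
  assume "nonzero_vec n v"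
  then obtain x where "x < 2^n" "v x \<noteq> 0" unfolding nonzero_vec_def by auto
  then have "0 < cmod (v x)" by simp
  also have "\<dots> \<le> vnorm n v" by (rule coord_le_vnorm) fact
  finally show ?thesis .
qed

lemma vnorm_zero: "vnorm n v = 0 \<Longrightarrow> x < 2^n \<Longrightarrow> v x = 0"
  using coord_le_vnorm[of x n v] by simp

lemma ham_matvec: "mat_vec n (ham_sum M h) v x = (\<Sum>a<M. mat_vec n (h a) v x)"
  unfolding mat_vec_def ham_sum_def by (simp add: sum_distrib_right sum.swap[of _ "{..<M}"])

lemma ham_inner: "inner_q n u (mat_vec n (ham_sum M h) v) = (\<Sum>a<M. inner_q n u (mat_vec n (h a) v))"
  unfolding inner_q_def ham_matvec by (simp add: sum_distrib_left sum.swap[of _ "{..<M}"])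

lemma ham_herm:
  assumes "\<forall>a<M. hermitian n (h a)" shows "hermitian n (ham_sum M h)"
  unfolding hermitian_def ham_sum_def cnj_sum
proof (intro allI impI sum.cong refl)
  fix x y :: nat and a assume "x < 2^n" "y < 2^n" "a \<in> {..<M}"
  then show "h a x y = cnj (h a y x)" using assms unfolding hermitian_def by blast
qed

lemma ham_psd: "\<forall>a<M. psd n (h a) \<Longrightarrow> Re (inner_q n v (mat_vec n (ham_sum M h) v)) \<ge> 0"
  unfolding ham_inner Re_sum
proof (intro sum_nonneg)
  fix a assume "\<forall>a<M. psd n (h a)" "a \<in> {..<M}"
  then have "psd n (h a)" by blast
  then show "0 \<le> Re (inner_q n v (mat_vec n (h a) v))" unfolding psd_def by blast
qed

lemma eig_nonneg:
  assumes psd: "\<And>v. Re (inner_q n v (mat_vec n A v)) \<ge> 0" and mu: "\<mu> \<in> eigenvalues n A"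
  shows "\<mu> \<ge> 0"
proof -
  obtain v where nz: "nonzero_vec n v" and ev: "\<forall>x<2^n. mat_vec n A v x = of_real \<mu> * v x"
    using mu unfolding eigenvalues_def by auto
  have "inner_q n v (mat_vec n A v) = inner_q n v (\<lambda>x. of_real \<mu> * v x)"
    using ev by (intro inner_q_cong) auto
  also have "\<dots> = of_real \<mu> * inner_q n v v"
    unfolding inner_q_def by (simp add: sum_distrib_left algebra_simps)
  finally have "Re (inner_q n v (mat_vec n A v)) = \<mu> * (vnorm n v)\<^sup>2"
    by (simp add: inner_self)
  with psd[of v] have "\<mu> * (vnorm n v)\<^sup>2 \<ge> 0" by simp
  moreover have "(vnorm n v)\<^sup>2 > 0" using vnorm_pos[OF nz] by simp
  ultimately show ?thesis by (simp add: zero_le_mult_iff)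
qed

lemma cm_mult_c:
  fixes f g :: "'a \<Rightarrow> complex"
  shows "continuous_map X euclidean f \<Longrightarrow> continuous_map X euclidean g \<Longrightarrow>
    continuous_map X euclidean (\<lambda>x. f x * g x)"
  by (simp add: continuous_map_atin tendsto_mult)

lemma cm_cnj:
  fixes f :: "'a \<Rightarrow> complex"
  shows "continuous_map X euclidean f \<Longrightarrow> continuous_map X euclidean (\<lambda>x. cnj (f x))"
  by (simp add: continuous_map_atin tendsto_cnj)

lemma cm_Re:
  fixes f :: "'a \<Rightarrow> complex"
  shows "continuous_map X euclidean f \<Longrightarrow> continuous_map X euclideanreal (\<lambda>x. Re (f x))"
  by (simp add: continuous_map_atin tendsto_Re)

lemma vnorm_scale: "vnorm n (\<lambda>x. c * v x) = cmod c * vnorm n v"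
  unfolding vnorm_def
  by (simp add: norm_mult power_mult_distrib sum_distrib_left[symmetric] real_sqrt_mult)

lemma quad_scale: "inner_q n (\<lambda>x. c * u x) (mat_vec n A (\<lambda>x. c * u x)) = cnj c * c * inner_q n u (mat_vec n A u)"
  unfolding inner_q_def mat_vec_def by (simp add: sum_distrib_left algebra_simps)

lemma inner_scale_right: "inner_q n u (\<lambda>x. c * v x) = c * inner_q n u v"
  unfolding inner_q_def by (simp add: sum_distrib_left algebra_simps)

lemma rayleigh_min:
  fixes A :: cmat and \<phi> u :: cvec
  assumes u: "inner_q n \<phi> u = 0" "nonzero_vec n u"
  shows "\<exists>v0. inner_q n \<phi> v0 = 0 \<and> vnorm n v0 = 1 \<and>
     (\<forall>w. inner_q n \<phi> w = 0 \<longrightarrow>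
        Re (inner_q n w (mat_vec n A w)) \<ge> Re (inner_q n v0 (mat_vec n A v0)) * (vnorm n w)\<^sup>2)"
proof -
  define X :: "(nat \<Rightarrow> complex) topology" where "X = product_topology (\<lambda>_. euclidean) {..<2^n}"
  define R where "R v = Re (inner_q n v (mat_vec n A v))" for v
  define K :: "(nat \<Rightarrow> complex) set" where "K = PiE {..<2^n} (\<lambda>_. cball 0 1)"
  define C where "C = ({v \<in> topspace X. (\<Sum>x<2^n. (cmod (v x))\<^sup>2) \<in> {1}} \<inter>
     {v \<in> topspace X. inner_q n \<phi> v \<in> {0}}) \<inter> K"
  have proj: "continuous_map X euclidean (\<lambda>v. v x)" if "x < 2^n" for x
    unfolding X_def using continuous_map_product_projection[of x "{..<2^n}" "\<lambda>_. euclidean"] that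
    by simp
  have c1: "continuous_map X euclideanreal (\<lambda>v. \<Sum>x<2^n. (cmod (v x))\<^sup>2)"
  proof (rule continuous_map_sum)
    fix x assume "x \<in> {..<(2::nat)^n}"
    then show "continuous_map X euclidean (\<lambda>v. (cmod (v x))\<^sup>2)"
      by (intro continuous_map_real_pow continuous_map_norm proj) simp
  qed simp
  have c2: "continuous_map X euclidean (\<lambda>v. inner_q n \<phi> v)"
    unfolding inner_q_def
  proof (rule continuous_map_sum)
    fix x assume "x \<in> {..<(2::nat)^n}"
    then show "continuous_map X euclidean (\<lambda>v. cnj (\<phi> x) * v x)"
      by (intro cm_mult_c continuous_map_canonical_const proj) simp
  qed simp
  have c3: "continuous_map X euclideanreal R"
    unfolding R_def inner_q_def mat_vec_def
  proof (rule cm_Re, rule continuous_map_sum)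
    fix x assume x: "x \<in> {..<(2::nat)^n}"
    have "continuous_map X euclidean (\<lambda>v. \<Sum>y<2^n. A x y * v y)"
    proof (rule continuous_map_sum)
      fix y assume "y \<in> {..<(2::nat)^n}"
      then show "continuous_map X euclidean (\<lambda>v. A x y * v y)"
        by (intro cm_mult_c continuous_map_canonical_const proj) simp
    qed simp
    moreover have "continuous_map X euclidean (\<lambda>v. cnj (v x))"
      using x by (intro cm_cnj proj) simp
    ultimately show "continuous_map X euclidean (\<lambda>v. cnj (v x) * (\<Sum>y<2^n. A x y * v y))"
      by (rule cm_mult_c[rotated])
  qed simp
  have "compactin X K" unfolding X_def K_def by (simp add: compactin_PiE)
  moreover have "closedin X ({v \<in> topspace X. (\<Sum>x<2^n. (cmod (v x))\<^sup>2) \<in> {1}} \<inter>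
     {v \<in> topspace X. inner_q n \<phi> v \<in> {0}})"
    by (intro closedin_Int closedin_continuous_map_preimage[OF c1] closedin_continuous_map_preimage[OF c2])
      simp_all
  ultimately have "compactin X C" unfolding C_def
    by (intro closed_Int_compactin)
  then have "compactin euclideanreal (R ` C)" by (rule image_compactin) (rule c3)
  then have cpt: "compact (R ` C)" by simp
  define nrm where "nrm w = (\<lambda>x. if x < 2^n then of_real (1 / vnorm n w) * w x else undefined)" for w
  have nrm: "nrm w \<in> C" "R (nrm w) = R w / (vnorm n w)\<^sup>2"
    if w: "inner_q n \<phi> w = 0" "vnorm n w \<noteq> 0" for w
  proof -
    have pos: "vnorm n w > 0" using w vnorm_nonneg[of n w] by simp
    have e1: "inner_q n \<phi> (nrm w) = inner_q n \<phi> (\<lambda>x. of_real (1 / vnorm n w) * w x)"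
      by (intro inner_q_cong) (auto simp: nrm_def)
    have e2: "vnorm n (nrm w) = vnorm n (\<lambda>x. of_real (1 / vnorm n w) * w x)"
      by (intro vnorm_cong) (auto simp: nrm_def)
    have vn: "vnorm n (nrm w) = 1" unfolding e2 vnorm_scale using pos by (simp add: norm_divide)
    have "(\<Sum>x<2^n. (cmod (nrm w x))\<^sup>2) = (vnorm n (nrm w))\<^sup>2"
      unfolding vnorm_def by (simp add: sum_nonneg)
    then have s1: "(\<Sum>x<2^n. (cmod (nrm w x))\<^sup>2) = 1" using vn by simp
    have s2: "inner_q n \<phi> (nrm w) = 0" unfolding e1 inner_scale_right using w by simp
    have top: "nrm w \<in> topspace X"
      unfolding X_def topspace_product_topology by (auto simp: PiE_iff extensional_def nrm_def)
    have kk: "nrm w \<in> K"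
      unfolding K_def
    proof (rule PiE_I)
      fix x :: nat assume "x \<in> {..<2^n}"
      then have x: "x < 2^n" by simp
      then have "cmod (w x) \<le> vnorm n w" by (rule coord_le_vnorm)
      then show "nrm w x \<in> cball 0 1" using pos x by (simp add: nrm_def norm_divide)
    qed (simp add: nrm_def)
    show "nrm w \<in> C" unfolding C_def using s1 s2 top kk by simp
    have mv: "mat_vec n A (nrm w) = mat_vec n A (\<lambda>x. of_real (1 / vnorm n w) * w x)"
      by (rule mat_vec_cong) (simp add: nrm_def)
    have "R (nrm w) = R (\<lambda>x. of_real (1 / vnorm n w) * w x)" unfolding R_def mv
      by (intro arg_cong[where f=Re] inner_q_cong) (auto simp: nrm_def)
    also have "\<dots> = R w / (vnorm n w)\<^sup>2"
      unfolding R_def quad_scale by (simp add: power2_eq_square)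
    finally show "R (nrm w) = R w / (vnorm n w)\<^sup>2" .
  qed
  have un: "vnorm n u \<noteq> 0" using vnorm_pos[OF u(2)] by simp
  have "R ` C \<noteq> {}" using nrm(1)[OF u(1) un] by auto
  from compact_attains_inf[OF cpt this] obtain v0 where v0: "v0 \<in> C" and mn: "\<forall>t\<in>C. R v0 \<le> R t"
    by auto
  have v0n: "vnorm n v0 = 1"
  proof -
    have "(\<Sum>x<2^n. (cmod (v0 x))\<^sup>2) = 1" using v0 unfolding C_def by simp
    then show ?thesis unfolding vnorm_def by simp
  qed
  have v0o: "inner_q n \<phi> v0 = 0" using v0 unfolding C_def by simp
  have main: "R v0 * (vnorm n w)\<^sup>2 \<le> R w" if w: "inner_q n \<phi> w = 0" for w
  proof (cases "vnorm n w = 0")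
    case True
    have "inner_q n w (mat_vec n A w) = 0" unfolding inner_q_def
      using vnorm_zero[OF True] by simp
    then show ?thesis using True unfolding R_def by simp
  next
    case False
    have "R v0 \<le> R w / (vnorm n w)\<^sup>2" using mn nrm[OF w False] by metis
    then show ?thesis using False vnorm_nonneg[of n w] by (simp add: field_simps)
  qed
  show ?thesis using v0n v0o main unfolding R_def by blast
qed

lemma inner_add_right: "inner_q n u (\<lambda>x. a x + b x) = inner_q n u a + inner_q n u b"
  unfolding inner_q_def by (simp add: sum.distrib algebra_simps)
lemma inner_diff_right: "inner_q n u (\<lambda>x. a x - b x) = inner_q n u a - inner_q n u b"
  unfolding inner_q_def by (simp add: sum_subtractf algebra_simps)
lemma inner_add_left: "inner_q n (\<lambda>x. a x + b x) u = inner_q n a u + inner_q n b u"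
  unfolding inner_q_def by (simp add: sum.distrib algebra_simps)
lemma inner_diff_left: "inner_q n (\<lambda>x. a x - b x) u = inner_q n a u - inner_q n b u"
  unfolding inner_q_def by (simp add: sum_subtractf algebra_simps)
lemma inner_scale_left: "inner_q n (\<lambda>x. c * a x) u = cnj c * inner_q n a u"
  unfolding inner_q_def by (simp add: sum_distrib_left algebra_simps)
lemma mat_vec_add: "mat_vec n A (\<lambda>x. a x + b x) = (\<lambda>x. mat_vec n A a x + mat_vec n A b x)"
  unfolding mat_vec_def by (simp add: sum.distrib algebra_simps)
lemma mat_vec_diff: "mat_vec n A (\<lambda>x. a x - b x) = (\<lambda>x. mat_vec n A a x - mat_vec n A b x)"
  unfolding mat_vec_def by (simp add: sum_subtractf algebra_simps)
lemma mat_vec_scale: "mat_vec n A (\<lambda>x. c * a x) = (\<lambda>x. c * mat_vec n A a x)"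
  unfolding mat_vec_def by (simp add: sum_distrib_left algebra_simps)

lemma quad_form_zero:
  fixes a c :: real
  assumes "\<forall>t. 2 * t * a + t\<^sup>2 * c \<ge> 0"
  shows "a = 0"
proof (rule ccontr)
  assume a: "a \<noteq> 0"
  define s where "s = 1 / (\<bar>c\<bar> + 1)"
  have s: "s > 0" "s * c < 2" unfolding s_def
    by (auto simp: field_simps abs_if split: if_splits)
  have "2 * (- a * s) * a + (- a * s)\<^sup>2 * c = a\<^sup>2 * s * (s * c - 2)"
    by (simp add: power2_eq_square algebra_simps)
  also have "\<dots> < 0" using a s by (intro mult_pos_neg) auto
  finally show False using assms[rule_format, of "- a * s"] by simp
qed

lemma lagrange:
  assumes herm: "hermitian n A" and phi0: "\<forall>x<2^n. mat_vec n A \<phi> x = 0"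
    and v0o: "inner_q n \<phi> v0 = 0" and v0n: "vnorm n v0 = 1"
    and mn: "\<forall>w. inner_q n \<phi> w = 0 \<longrightarrow> Re (inner_q n w (mat_vec n A w)) \<ge> \<mu> * (vnorm n w)\<^sup>2"
    and mu: "\<mu> = Re (inner_q n v0 (mat_vec n A v0))"
  shows "\<forall>x<2^n. mat_vec n A v0 x = of_real \<mu> * v0 x"
proof -
  define r where "r = (\<lambda>x. mat_vec n A v0 x - of_real \<mu> * v0 x)"
  have "inner_q n \<phi> (mat_vec n A v0) = inner_q n (mat_vec n A \<phi>) v0" by (rule herm_swap[OF herm])
  also have "\<dots> = inner_q n (\<lambda>x. 0) v0" using phi0 by (intro inner_q_cong) auto
  also have "\<dots> = 0" unfolding inner_q_def by simp
  finally have pa: "inner_q n \<phi> (mat_vec n A v0) = 0" .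
  have ro: "inner_q n \<phi> r = 0" unfolding r_def inner_diff_right inner_scale_right pa v0o by simp
  define Q where "Q = Re (inner_q n r (mat_vec n A r)) - \<mu> * (vnorm n r)\<^sup>2"
  have key: "2 * t * (vnorm n r)\<^sup>2 + t\<^sup>2 * Q \<ge> 0" for t :: real
  proof -
    define w where "w = (\<lambda>x. v0 x + of_real t * r x)"
    have wo: "inner_q n \<phi> w = 0" unfolding w_def inner_add_right inner_scale_right ro v0o by simp
    have e1: "inner_q n w (mat_vec n A w) = inner_q n v0 (mat_vec n A v0)
       + of_real t * (inner_q n v0 (mat_vec n A r) + inner_q n r (mat_vec n A v0))
       + of_real (t\<^sup>2) * inner_q n r (mat_vec n A r)"
      unfolding w_def mat_vec_add mat_vec_scale inner_add_left inner_add_right inner_scale_left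
        inner_scale_right
      by (simp add: algebra_simps power2_eq_square)
    have e2: "inner_q n w w = inner_q n v0 v0 + of_real t * (inner_q n v0 r + inner_q n r v0)
       + of_real (t\<^sup>2) * inner_q n r r"
      unfolding w_def inner_add_left inner_add_right inner_scale_left inner_scale_right
      by (simp add: algebra_simps power2_eq_square)
    have h1: "inner_q n v0 (mat_vec n A r) = cnj (inner_q n r (mat_vec n A v0))"
      using herm_swap[OF herm, of v0 r] inner_q_cnj[of n "mat_vec n A v0" r] by simp
    have h2: "inner_q n v0 r = cnj (inner_q n r v0)" by (rule inner_q_cnj)
    have rr: "inner_q n r (mat_vec n A v0) - of_real \<mu> * inner_q n r v0 = inner_q n r r"
      unfolding r_def inner_diff_right inner_scale_right ..
    have "Re (inner_q n r (mat_vec n A v0)) - \<mu> * Re (inner_q n r v0) = (vnorm n r)\<^sup>2"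
      using arg_cong[OF rr, of Re] by (simp add: inner_self)
    moreover have "Re (inner_q n w (mat_vec n A w)) = \<mu> + 2 * t * Re (inner_q n r (mat_vec n A v0))
        + t\<^sup>2 * Re (inner_q n r (mat_vec n A r))"
      unfolding e1 h1 mu by simp
    moreover have "(vnorm n w)\<^sup>2 = 1 + 2 * t * Re (inner_q n r v0) + t\<^sup>2 * (vnorm n r)\<^sup>2"
    proof -
      have "(vnorm n w)\<^sup>2 = Re (inner_q n w w)" by (simp add: inner_self)
      also have "\<dots> = 1 + 2 * t * Re (inner_q n r v0) + t\<^sup>2 * (vnorm n r)\<^sup>2"
        unfolding e2 h2 by (simp add: inner_self v0n)
      finally show ?thesis .
    qed
    moreover have "Re (inner_q n w (mat_vec n A w)) \<ge> \<mu> * (vnorm n w)\<^sup>2" using mn wo by blast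
    ultimately show ?thesis unfolding Q_def by (simp add: algebra_simps)
  qed
  have "(vnorm n r)\<^sup>2 = 0" by (rule quad_form_zero) (use key in auto)
  then have "vnorm n r = 0" by simp
  then show ?thesis using vnorm_zero[of n r] unfolding r_def by simp
qed

lemma exists_orth:
  fixes \<phi> :: cvec
  assumes n: "n \<ge> 1"
  shows "\<exists>u. inner_q n \<phi> u = 0 \<and> nonzero_vec n u"
proof -
  have "(2::nat)^1 \<le> 2^n" using n by (intro power_increasing) auto
  then have one: "(1::nat) < 2^n" by simp
  show ?thesis
  proof (cases "\<phi> 0 = 0")
    case True
    define u :: cvec where "u = (\<lambda>x. if x = 0 then 1 else 0)"
    have "inner_q n \<phi> u = (\<Sum>x<(2::nat)^n. if x = 0 then cnj (\<phi> 0) else 0)"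
      unfolding inner_q_def u_def by (intro sum.cong) auto
    also have "\<dots> = 0" using True by simp
    finally have "inner_q n \<phi> u = 0" .
    moreover have "u 0 \<noteq> 0" unfolding u_def by simp
    ultimately show ?thesis unfolding nonzero_vec_def using one by (metis pos2 zero_less_power)
  next
    case False
    define u :: cvec where "u = (\<lambda>x. (if x = 0 then cnj (\<phi> 1) else 0) + (if x = 1 then - cnj (\<phi> 0) else 0))"
    have "inner_q n \<phi> u = (\<Sum>x<(2::nat)^n. (if x = 0 then cnj (\<phi> 0) * cnj (\<phi> 1) else 0))
       + (\<Sum>x<(2::nat)^n. (if x = 1 then - cnj (\<phi> 1) * cnj (\<phi> 0) else 0))"
      unfolding inner_q_def u_def sum.distrib[symmetric] by (intro sum.cong) (auto simp: algebra_simps)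
    also have "\<dots> = 0" using one by simp
    finally have "inner_q n \<phi> u = 0" .
    moreover have "u 1 \<noteq> 0" using False unfolding u_def by simp
    ultimately show ?thesis using one unfolding nonzero_vec_def by blast
  qed
qed

lemma vnorm1_nonzero: "vnorm n v = 1 \<Longrightarrow> nonzero_vec n v"
proof (rule ccontr)
  assume "vnorm n v = 1" "\<not> nonzero_vec n v"
  then have "\<forall>x<2^n. v x = 0" unfolding nonzero_vec_def by auto
  then have "vnorm n v = 0" unfolding vnorm_def by simp
  with \<open>vnorm n v = 1\<close> show False by simp
qed

lemma ground_zero:
  assumes psd: "\<forall>v. Re (inner_q n v (mat_vec n A v)) \<ge> 0"
    and phi0: "\<forall>x<2^n. mat_vec n A \<phi> x = 0" and phin: "vnorm n \<phi> = 1"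
  shows "ground_energy n A = 0"
proof -
  have "0 \<in> eigenvalues n A" unfolding eigenvalues_def
    using vnorm1_nonzero[OF phin] phi0 by auto
  moreover have "\<And>y. y \<in> eigenvalues n A \<Longrightarrow> 0 \<le> y"
    using eig_nonneg psd by blast
  ultimately show ?thesis unfolding ground_energy_def by (intro Min_eqI eig_finite) auto
qed

lemma gap_bound:
  assumes herm: "hermitian n A" and psd: "\<forall>v. Re (inner_q n v (mat_vec n A v)) \<ge> 0"
    and ugs: "unique_ground_state n A \<phi>" and phi0: "\<forall>x<2^n. mat_vec n A \<phi> x = 0"
    and phin: "vnorm n \<phi> = 1" and n: "n \<ge> 1"
  shows "spectral_gap n A > 0"
    and "\<forall>w. inner_q n \<phi> w = 0 \<longrightarrow> Re (inner_q n w (mat_vec n A w)) \<ge> spectral_gap n A * (vnorm n w)\<^sup>2"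
proof -
  have g0: "ground_energy n A = 0" by (rule ground_zero[OF psd phi0 phin])
  obtain u where u: "inner_q n \<phi> u = 0" "nonzero_vec n u" using exists_orth[OF n] by blast
  obtain v0 where v0o: "inner_q n \<phi> v0 = 0" and v0n: "vnorm n v0 = 1"
    and mn: "\<forall>w. inner_q n \<phi> w = 0 \<longrightarrow>
        Re (inner_q n w (mat_vec n A w)) \<ge> Re (inner_q n v0 (mat_vec n A v0)) * (vnorm n w)\<^sup>2"
    using rayleigh_min[OF u, of A] by blast
  define \<mu> where "\<mu> = Re (inner_q n v0 (mat_vec n A v0))"
  have ev: "\<forall>x<2^n. mat_vec n A v0 x = of_real \<mu> * v0 x"
    by (rule lagrange[OF herm phi0 v0o v0n]) (use mn \<mu>_def in auto)
  have nz: "nonzero_vec n v0" by (rule vnorm1_nonzero[OF v0n])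
  have muE: "\<mu> \<in> eigenvalues n A" unfolding eigenvalues_def using nz ev by auto
  have mu0: "\<mu> \<noteq> 0"
  proof
    assume "\<mu> = 0"
    then have "is_ground_state n A v0" unfolding is_ground_state_def g0 using nz ev by simp
    then obtain c where c: "\<forall>x<2^n. v0 x = c * \<phi> x" using ugs unfolding unique_ground_state_def by blast
    have "inner_q n \<phi> v0 = inner_q n \<phi> (\<lambda>x. c * \<phi> x)" using c by (intro inner_q_cong) auto
    also have "\<dots> = c" unfolding inner_scale_right inner_self phin by simp
    finally have "c = 0" using v0o by simp
    then have "vnorm n v0 = vnorm n (\<lambda>x. 0 * \<phi> x)" using c by (intro vnorm_cong) auto
    then have "vnorm n v0 = 0" unfolding vnorm_scale by simp
    then show False using v0n by simp
  qed
  have fin: "finite (eigenvalues n A - {0})" using eig_finite by blast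
  have ne: "\<mu> \<in> eigenvalues n A - {0}" using muE mu0 by simp
  have gap: "spectral_gap n A = Min (eigenvalues n A - {0})"
    unfolding spectral_gap_def g0 by simp
  have "Min (eigenvalues n A - {0}) \<in> eigenvalues n A - {0}" using fin ne by (intro Min_in) auto
  then show "spectral_gap n A > 0" unfolding gap using eig_nonneg[OF _] psd
    by (metis DiffD1 DiffD2 insertI1 order_le_less)
  have gm: "spectral_gap n A \<le> \<mu>" unfolding gap using fin ne by (rule Min_le)
  show "\<forall>w. inner_q n \<phi> w = 0 \<longrightarrow> Re (inner_q n w (mat_vec n A w)) \<ge> spectral_gap n A * (vnorm n w)\<^sup>2"
  proof (intro allI impI)
    fix w assume "inner_q n \<phi> w = 0"
    then have "Re (inner_q n w (mat_vec n A w)) \<ge> \<mu> * (vnorm n w)\<^sup>2" using mn \<mu>_def by blast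
    moreover have "spectral_gap n A * (vnorm n w)\<^sup>2 \<le> \<mu> * (vnorm n w)\<^sup>2"
      using gm by (intro mult_right_mono) auto
    ultimately show "Re (inner_q n w (mat_vec n A w)) \<ge> spectral_gap n A * (vnorm n w)\<^sup>2" by simp
  qed
qed

lemma nonneg_real: "nonneg_state n v \<Longrightarrow> x < 2^n \<Longrightarrow> v x = of_real (Re (v x)) \<and> Re (v x) \<ge> 0"
  unfolding nonneg_state_def by (auto simp: Reals_def)

theorem lemma5p1:
  fixes n M k T :: nat
    and h :: "nat \<Rightarrow> real \<Rightarrow> cmat"   \<comment> \<open>h a s = H_a(s)\<close>
    and S :: "nat \<Rightarrow> nat set"        \<comment> \<open>qubits on which H_a acts\<close>
    and dH :: "real \<Rightarrow> cmat"          \<comment> \<open>dH(s)/ds\<close>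
    and J \<Delta> :: real
    and \<psi> :: "nat \<Rightarrow> cvec"
  assumes local: "\<forall>a<M. S a \<subseteq> {..<n} \<and> card (S a) \<le> k \<and> (\<forall>s\<in>{0..1}. acts_on n (S a) (h a s))"
    and stoq: "\<forall>s\<in>{0..1}. stoquastic_ham n M (\<lambda>a. h a s)"
    and ff: "\<forall>s\<in>{0..1}. frustration_free n M (\<lambda>a. h a s)"
    and deriv: "\<forall>s\<in>{0..1}. \<forall>x<2^n. \<forall>y<2^n.
                 ((\<lambda>t. ham_sum M (\<lambda>a. h a t) x y) has_vector_derivative dH s x y) (at s within {0..1})"
    and J_ub: "\<forall>s\<in>{0..1}. opnorm n (dH s) \<le> J"
    and J_att: "\<exists>s\<in>{0..1}. opnorm n (dH s) = J"
    and T_pos: "T > 0"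
    and gs: "\<forall>j\<le>T. unique_ground_state n (ham_sum M (\<lambda>a. h a (real j / real T))) (\<psi> j)"
    and zero: "\<forall>j\<le>T. \<forall>x<2^n. mat_vec n (ham_sum M (\<lambda>a. h a (real j / real T))) (\<psi> j) x = 0"
    and nonneg: "\<forall>j\<le>T. nonneg_state n (\<psi> j)"
    and Delta: "\<Delta> = Min ((\<lambda>j. spectral_gap n (ham_sum M (\<lambda>a. h a (real j / real T)))) ` {..T})"
  shows "\<forall>j<T. Re (inner_q n (\<psi> (Suc j)) (\<psi> j)) \<ge> 1 - J\<^sup>2 / ((real T)\<^sup>2 * \<Delta>\<^sup>2)"
proof (intro allI impI)
  fix j assume jT: "j < T"
  define Hs where "Hs s = ham_sum M (\<lambda>a. h a s)" for s
  define Hj where "Hj i = Hs (real i / real T)" for i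
  define \<phi> where "\<phi> = \<psi> (Suc j)"
  define \<psi>0 where "\<psi>0 = \<psi> j"
  have sT: "real i / real T \<in> {0..1}" if "i \<le> T" for i
    using that T_pos by (auto simp: field_simps)
  have hermj: "hermitian n (Hj i)" and psdj: "\<forall>v. Re (inner_q n v (mat_vec n (Hj i) v)) \<ge> 0"
    if "i \<le> T" for i
  proof -
    have "frustration_free n M (\<lambda>a. h a (real i / real T))" using ff sT[OF that] by blast
    then have p: "\<forall>a<M. psd n (h a (real i / real T))" unfolding frustration_free_def by blast
    then have "\<forall>a<M. hermitian n (h a (real i / real T))" unfolding psd_def by blast
    then show "hermitian n (Hj i)" unfolding Hj_def Hs_def by (rule ham_herm)
    show "\<forall>v. Re (inner_q n v (mat_vec n (Hj i) v)) \<ge> 0"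
      unfolding Hj_def Hs_def using p by (blast intro: ham_psd)
  qed
  have nnphi: "nonneg_state n \<phi>" and nnpsi: "nonneg_state n \<psi>0"
    using nonneg jT unfolding \<phi>_def \<psi>0_def by auto
  have phin: "vnorm n \<phi> = 1" and psin: "vnorm n \<psi>0 = 1"
    using nnphi nnpsi unfolding nonneg_state_def by auto
  define cr where "cr = (\<Sum>x<(2::nat)^n. Re (\<phi> x) * Re (\<psi>0 x))"
  have c_eq: "inner_q n \<phi> \<psi>0 = of_real cr"
  proof -
    have "inner_q n \<phi> \<psi>0 = (\<Sum>x<(2::nat)^n. of_real (Re (\<phi> x) * Re (\<psi>0 x)))"
      unfolding inner_q_def
    proof (intro sum.cong refl)
      fix x assume "x \<in> {..<(2::nat)^n}"
      then have x: "x < 2^n" by simp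
      have a: "\<phi> x = of_real (Re (\<phi> x))" using nonneg_real[OF nnphi x] by blast
      have b: "\<psi>0 x = of_real (Re (\<psi>0 x))" using nonneg_real[OF nnpsi x] by blast
      show "cnj (\<phi> x) * \<psi>0 x = of_real (Re (\<phi> x) * Re (\<psi>0 x))"
        by (subst a, subst b) simp
    qed
    then show ?thesis unfolding cr_def by simp
  qed
  have cr0: "cr \<ge> 0" unfolding cr_def
    using nonneg_real[OF nnphi] nonneg_real[OF nnpsi] by (auto intro!: sum_nonneg)
  have goal_eq: "Re (inner_q n (\<psi> (Suc j)) (\<psi> j)) = cr"
    using c_eq unfolding \<phi>_def \<psi>0_def by simp
  show "Re (inner_q n (\<psi> (Suc j)) (\<psi> j)) \<ge> 1 - J\<^sup>2 / ((real T)\<^sup>2 * \<Delta>\<^sup>2)"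
  proof (cases "n = 0")
    case True
    have one: "Re (v 0) = 1" if "nonneg_state n v" for v
    proof -
      have "v 0 = of_real (Re (v 0)) \<and> Re (v 0) \<ge> 0" using nonneg_real[OF that] True by simp
      then have "cmod (v 0) = Re (v 0)" by (metis norm_of_real abs_of_nonneg)
      moreover have "vnorm n v = cmod (v 0)" unfolding vnorm_def using True by simp
      ultimately show ?thesis using that unfolding nonneg_state_def by simp
    qed
    have "cr = 1" unfolding cr_def using True one[OF nnphi] one[OF nnpsi] by simp
    moreover have "J\<^sup>2 / ((real T)\<^sup>2 * \<Delta>\<^sup>2) \<ge> 0" by simp
    ultimately show ?thesis using goal_eq by simp
  next
    case False
    then have n1: "n \<ge> 1" by simp
    have herm: "hermitian n (Hj (Suc j))" and psd: "\<forall>v. Re (inner_q n v (mat_vec n (Hj (Suc j)) v)) \<ge> 0"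
      using hermj psdj jT by auto
    have ugs: "unique_ground_state n (Hj i) (\<psi> i)" and z: "\<forall>x<2^n. mat_vec n (Hj i) (\<psi> i) x = 0"
      and pn: "vnorm n (\<psi> i) = 1" if "i \<le> T" for i
      using gs zero nonneg that unfolding Hj_def Hs_def nonneg_state_def by auto
    have gpos: "spectral_gap n (Hj i) > 0" if "i \<le> T" for i
      using gap_bound(1)[OF hermj[OF that] psdj[OF that] ugs[OF that] z[OF that] pn[OF that] n1] .
    have ray: "\<forall>w. inner_q n \<phi> w = 0 \<longrightarrow> Re (inner_q n w (mat_vec n (Hj (Suc j)) w))
        \<ge> spectral_gap n (Hj (Suc j)) * (vnorm n w)\<^sup>2"
      unfolding \<phi>_def using gap_bound(2)[OF herm psd ugs z pn n1] jT by simp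
    have Dset: "\<Delta> = Min ((\<lambda>i. spectral_gap n (Hj i)) ` {..T})"
      unfolding Delta Hj_def Hs_def ..
    have "\<Delta> \<in> (\<lambda>i. spectral_gap n (Hj i)) ` {..T}" unfolding Dset by (intro Min_in) auto
    then have Dpos: "\<Delta> > 0" using gpos by auto
    have Dle: "\<Delta> \<le> spectral_gap n (Hj (Suc j))" unfolding Dset using jT by (intro Min_le) auto
    define c where "c = inner_q n \<phi> \<psi>0"
    define v where "v = (\<lambda>x. \<psi>0 x - c * \<phi> x)"
    have pp: "inner_q n \<phi> \<phi> = 1" using phin by (simp add: inner_self)
    have qq: "inner_q n \<psi>0 \<psi>0 = 1" using psin by (simp add: inner_self)
    have vo: "inner_q n \<phi> v = 0" unfolding v_def inner_diff_right inner_scale_right pp c_def by simp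
    have cc: "c = of_real cr" unfolding c_def by (rule c_eq)
    have "inner_q n v v = 1 - of_real (cr\<^sup>2)"
      unfolding v_def inner_diff_right inner_diff_left inner_scale_right inner_scale_left pp qq
      using inner_q_cnj[of n \<psi>0 \<phi>] c_eq unfolding cc
      by (simp add: algebra_simps power2_eq_square)
    then have vn: "(vnorm n v)\<^sup>2 = 1 - cr\<^sup>2" unfolding inner_self
      by (metis of_real_1 of_real_diff of_real_eq_iff)
    have phiz: "\<forall>x<2^n. mat_vec n (Hj (Suc j)) \<phi> x = 0" using z[of "Suc j"] jT unfolding \<phi>_def by simp
    have Hv: "vnorm n (mat_vec n (Hj (Suc j)) v) = vnorm n (mat_vec n (Hj (Suc j)) \<psi>0)"
      unfolding v_def mat_vec_diff mat_vec_scale by (rule vnorm_cong) (use phiz in simp)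
    have mvt: "(vnorm n (\<lambda>x. mat_vec n (Hs (real (Suc j) / real T)) \<psi>0 x
              - mat_vec n (Hs (real j / real T)) \<psi>0 x))\<^sup>2
         \<le> (J * (real (Suc j) / real T - real j / real T))\<^sup>2"
      by (rule mvt_bound[where D = dH]) (use deriv J_ub psin T_pos jT in \<open>auto simp: Hs_def field_simps\<close>)
    have "vnorm n (\<lambda>x. mat_vec n (Hs (real (Suc j) / real T)) \<psi>0 x
              - mat_vec n (Hs (real j / real T)) \<psi>0 x) = vnorm n (mat_vec n (Hj (Suc j)) \<psi>0)"
      using z[of j] jT unfolding Hj_def \<psi>0_def by (intro vnorm_cong) simp
    moreover have "real (Suc j) / real T - real j / real T = 1 / real T"
      by (simp add: diff_divide_distrib[symmetric])
    ultimately have hb: "(vnorm n (mat_vec n (Hj (Suc j)) \<psi>0))\<^sup>2 \<le> J\<^sup>2 / (real T)\<^sup>2"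
      using mvt by (simp add: power_divide)
    have "\<Delta> * (vnorm n v)\<^sup>2 \<le> spectral_gap n (Hj (Suc j)) * (vnorm n v)\<^sup>2"
      using Dle by (intro mult_right_mono) auto
    also have "\<dots> \<le> Re (inner_q n v (mat_vec n (Hj (Suc j)) v))" using ray vo by blast
    also have "\<dots> \<le> cmod (inner_q n v (mat_vec n (Hj (Suc j)) v))" by (rule complex_Re_le_cmod)
    also have "\<dots> \<le> vnorm n v * vnorm n (mat_vec n (Hj (Suc j)) \<psi>0)"
      using cauchy_schwarz[of n v "mat_vec n (Hj (Suc j)) v"] unfolding Hv .
    finally have ineq: "\<Delta> * (vnorm n v)\<^sup>2 \<le> vnorm n v * vnorm n (mat_vec n (Hj (Suc j)) \<psi>0)" .
    have dv: "\<Delta> * vnorm n v \<le> vnorm n (mat_vec n (Hj (Suc j)) \<psi>0)"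
    proof (cases "vnorm n v = 0")
      case True then show ?thesis by (simp add: vnorm_nonneg)
    next
      case False
      then have "vnorm n v > 0" using vnorm_nonneg[of n v] by simp
      with ineq show ?thesis by (simp add: power2_eq_square algebra_simps)
    qed
    have "\<Delta>\<^sup>2 * (vnorm n v)\<^sup>2 \<le> (vnorm n (mat_vec n (Hj (Suc j)) \<psi>0))\<^sup>2"
      using dv Dpos vnorm_nonneg[of n v] by (metis power_mono power_mult_distrib mult_nonneg_nonneg less_imp_le)
    with hb have "\<Delta>\<^sup>2 * (1 - cr\<^sup>2) \<le> J\<^sup>2 / (real T)\<^sup>2" unfolding vn by simp
    moreover have d2: "\<Delta>\<^sup>2 > 0" using Dpos by simp
    ultimately have e: "(1 - cr\<^sup>2) * \<Delta>\<^sup>2 \<le> J\<^sup>2 / (real T)\<^sup>2" by (simp only: mult.commute)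
    have "1 - cr\<^sup>2 \<le> (J\<^sup>2 / (real T)\<^sup>2) / \<Delta>\<^sup>2" using e pos_le_divide_eq[OF d2] by blast
    moreover have "(J\<^sup>2 / (real T)\<^sup>2) / \<Delta>\<^sup>2 = J\<^sup>2 / ((real T)\<^sup>2 * \<Delta>\<^sup>2)"
      by (rule divide_divide_eq_left)
    ultimately have le: "1 - cr\<^sup>2 \<le> J\<^sup>2 / ((real T)\<^sup>2 * \<Delta>\<^sup>2)" by simp
    have "cr\<^sup>2 \<le> 1" using vn by (metis diff_ge_0_iff_ge zero_le_power2)
    then have "cr \<le> 1" using cr0 by (simp add: power_le_one_iff)
    then have "cr\<^sup>2 \<le> cr" using cr0 by (simp add: power2_eq_square mult_left_le)
    then show ?thesis using le goal_eq by simp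
  qed
qed

end
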